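(* If $n$ is a non-negative integer and $x$ is a complex number, then $$\sum_{k = 1}^n \sum_{j = 0}^{k - 1} \binom{n}{j} \frac{x^{n - j}}{k - j} = (1 + x)^n H_n - \sum_{k = 1}^n \frac{(1 + x)^{n - k}}{k}.$$ In particular, $$\sum_{k = 1}^n \sum_{j = 0}^{k - 1} \frac{\binom{n}{j}}{k - j} = 2^n \left(H_n - \sum_{k = 1}^n \frac{1}{2^k k} \right).$$
   Context: $H_n=\sum_{m=1}^n\frac1m$. Empty sums are zero. *)

theory Defs
  imports "HOL-Analysis.Analysis"
begin

end

theory Submission
  imports Defs
begin

lemma swap_tri:
  fixes f :: "nat \<Rightarrow> nat \<Rightarrow> complex"
  shows "(\<Sum>k=1..n. \<Sum>j=0..k-1. f j k) = (\<Sum>j<n. \<Sum>k=Suc j..n. f j k)"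
proof (induction n)
  case 0 then show ?case by simp
next
  case (Suc n)
  have "(\<Sum>k=1..Suc n. \<Sum>j=0..k-1. f j k) = (\<Sum>k=1..n. \<Sum>j=0..k-1. f j k) + (\<Sum>j=0..n. f j (Suc n))"
    by simp
  also have "\<dots> = (\<Sum>j<n. \<Sum>k=Suc j..n. f j k) + (\<Sum>j<n. f j (Suc n)) + f n (Suc n)"
    using Suc by (simp add: atLeast0AtMost lessThan_Suc_atMost[symmetric])
  also have "\<dots> = (\<Sum>j<n. \<Sum>k=Suc j..Suc n. f j k) + f n (Suc n)"
    by (simp add: sum.distrib)
  also have "\<dots> = (\<Sum>j<Suc n. \<Sum>k=Suc j..Suc n. f j k)"
    by simp
  finally show ?case .
qed

lemma inner_harm:
  "j \<le> n \<Longrightarrow> (\<Sum>k=Suc j..n. 1 / of_nat (k - j) :: complex) = harm (n - j)"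
proof (induction n)
  case 0 then show ?case by (simp add: harm_expand)
next
  case (Suc n)
  show ?case
  proof (cases "j = Suc n")
    case True then show ?thesis by (simp add: harm_expand)
  next
    case False
    then have "j \<le> n" using Suc by simp
    then have "Suc n - j = Suc (n - j)" by simp
    then show ?thesis using Suc.IH[OF \<open>j \<le> n\<close>] \<open>j \<le> n\<close>
      by (simp add: harm_Suc field_simps)
  qed
qed

definition F :: "complex \<Rightarrow> nat \<Rightarrow> complex" where
  "F x n = (\<Sum>m\<le>n. of_nat (n choose m) * x ^ m * harm m)"

lemma lhs_F:
  fixes x :: complex
  shows "(\<Sum>k=1..n. \<Sum>j=0..k-1. of_nat (n choose j) * x ^ (n - j) / of_nat (k - j)) = F x n"
proof -
  have "(\<Sum>k=1..n. \<Sum>j=0..k-1. of_nat (n choose j) * x ^ (n - j) / of_nat (k - j))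
      = (\<Sum>j<n. \<Sum>k=Suc j..n. of_nat (n choose j) * x ^ (n - j) * (1 / of_nat (k - j)))"
    by (subst swap_tri) simp
  also have "\<dots> = (\<Sum>j<n. of_nat (n choose j) * x ^ (n - j) * harm (n - j))"
  proof (rule sum.cong[OF refl])
    fix j assume "j \<in> {..<n}"
    then have "j \<le> n" by simp
    have "(\<Sum>k=Suc j..n. of_nat (n choose j) * x ^ (n - j) * (1 / of_nat (k - j)))
        = of_nat (n choose j) * x ^ (n - j) * (\<Sum>k=Suc j..n. 1 / of_nat (k - j) :: complex)"
      by (rule sum_distrib_left[symmetric])
    then show "(\<Sum>k=Suc j..n. of_nat (n choose j) * x ^ (n - j) * (1 / of_nat (k - j)))
        = of_nat (n choose j) * x ^ (n - j) * harm (n - j)"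
      using inner_harm[OF \<open>j \<le> n\<close>] by simp
  qed
  also have "\<dots> = (\<Sum>j\<le>n. of_nat (n choose j) * x ^ (n - j) * harm (n - j))"
    by (simp add: lessThan_Suc_atMost[symmetric] harm_expand)
  also have "\<dots> = (\<Sum>j\<le>n. of_nat (n choose (n - j)) * x ^ (n - j) * harm (n - j))"
    by (rule sum.cong[OF refl]) (simp add: binomial_symmetric[symmetric])
  also have "\<dots> = F x n"
    unfolding F_def atLeast0AtMost[symmetric]
    by (subst (2) sum.atLeastAtMost_rev) simp
  finally show ?thesis .
qed

lemma binom_int:
  fixes x :: complex
  shows "(\<Sum>i\<le>n. of_nat (n choose i) * x ^ Suc i / of_nat (Suc i)) = ((1 + x) ^ Suc n - 1) / of_nat (Suc n)"
proof -
  have "(1 + x) ^ Suc n = (\<Sum>k\<le>Suc n. of_nat (Suc n choose k) * x ^ k)"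
    using binomial_ring[of x 1 "Suc n"] by (simp add: add.commute)
  also have "\<dots> = 1 + (\<Sum>i\<le>n. of_nat (Suc n choose Suc i) * x ^ Suc i)"
    by (subst sum.atMost_Suc_shift) simp
  also have "(\<Sum>i\<le>n. of_nat (Suc n choose Suc i) * x ^ Suc i) = of_nat (Suc n) * (\<Sum>i\<le>n. of_nat (n choose i) * x ^ Suc i / of_nat (Suc i))"
    unfolding sum_distrib_left
  proof (rule sum.cong[OF refl])
    fix i
    have h: "of_nat (Suc n choose Suc i) * of_nat (Suc i) = (of_nat (Suc n) * of_nat (n choose i) :: complex)"
      using Suc_times_binomial_eq[of n i] by (metis of_nat_mult)
    have nz: "(of_nat (Suc i) :: complex) \<noteq> 0" by (simp only: of_nat_eq_0_iff Suc_neq_Zero not_False_eq_True)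
    have "of_nat (Suc n) * (of_nat (n choose i) * x ^ Suc i / of_nat (Suc i))
        = (of_nat (Suc n) * of_nat (n choose i)) * x ^ Suc i / (of_nat (Suc i) :: complex)"
      by (simp only: mult.assoc times_divide_eq_right)
    also have "\<dots> = of_nat (Suc n choose Suc i) * x ^ Suc i * (of_nat (Suc i) / of_nat (Suc i))"
      by (simp only: h[symmetric] mult_ac times_divide_eq_right)
    also have "\<dots> = of_nat (Suc n choose Suc i) * x ^ Suc i"
      using nz by simp
    finally show "of_nat (Suc n choose Suc i) * x ^ Suc i = of_nat (Suc n) * (of_nat (n choose i) * x ^ Suc i / of_nat (Suc i))"
      by simp
  qed
  finally have e: "(1 + x) ^ Suc n - 1 = of_nat (Suc n) * (\<Sum>i\<le>n. of_nat (n choose i) * x ^ Suc i / of_nat (Suc i))"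
    by simp
  have nz: "(of_nat (Suc n) :: complex) \<noteq> 0" by (simp only: of_nat_eq_0_iff Suc_neq_Zero not_False_eq_True)
  show ?thesis unfolding e using nz by simp
qed

lemma F_Suc:
  fixes x :: complex
  shows "F x (Suc n) = (1 + x) * F x n + ((1 + x) ^ Suc n - 1) / of_nat (Suc n)"
proof -
  define g where "g m = x ^ m * harm m" for m
  have F: "F x k = (\<Sum>m\<le>k. of_nat (k choose m) * g m)" for k
    unfolding F_def g_def by (simp add: mult.assoc)
  have "F x (Suc n) = g 0 + (\<Sum>i\<le>n. of_nat (Suc n choose Suc i) * g (Suc i))"
    unfolding F by (subst sum.atMost_Suc_shift) (simp add: g_def harm_expand)
  also have "\<dots> = g 0 + (\<Sum>i\<le>n. of_nat (n choose Suc i) * g (Suc i)) + (\<Sum>i\<le>n. of_nat (n choose i) * g (Suc i))"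
    by (simp add: sum.distrib distrib_right)
  also have "g 0 + (\<Sum>i\<le>n. of_nat (n choose Suc i) * g (Suc i)) = (\<Sum>i\<le>Suc n. of_nat (n choose i) * g i)"
    by (subst sum.atMost_Suc_shift) simp
  also have "\<dots> = F x n"
    unfolding F by simp
  also have "(\<Sum>i\<le>n. of_nat (n choose i) * g (Suc i)) = x * F x n + (\<Sum>i\<le>n. of_nat (n choose i) * x ^ Suc i / of_nat (Suc i))"
    unfolding F_def sum_distrib_left sum.distrib[symmetric]
    by (rule sum.cong[OF refl]) (simp add: g_def harm_Suc distrib_left divide_inverse mult_ac)
  finally have eq: "F x (Suc n) = F x n + (x * F x n + (\<Sum>i\<le>n. of_nat (n choose i) * x ^ Suc i / of_nat (Suc i)))" .
  show ?thesis unfolding eq binom_int by (simp add: algebra_simps)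
qed

definition G :: "complex \<Rightarrow> nat \<Rightarrow> complex" where
  "G x n = (1 + x) ^ n * harm n - (\<Sum>k=1..n. (1 + x) ^ (n - k) / of_nat k)"

lemma G_Suc:
  fixes x :: complex
  shows "G x (Suc n) = (1 + x) * G x n + ((1 + x) ^ Suc n - 1) / of_nat (Suc n)"
proof -
  have "(\<Sum>k=1..Suc n. (1 + x) ^ (Suc n - k) / of_nat k) = (\<Sum>k=1..n. (1 + x) ^ (Suc n - k) / of_nat k) + 1 / of_nat (Suc n)"
    by simp
  also have "(\<Sum>k=1..n. (1 + x) ^ (Suc n - k) / of_nat k) = (1 + x) * (\<Sum>k=1..n. (1 + x) ^ (n - k) / of_nat k)"
    unfolding sum_distrib_left
    by (rule sum.cong[OF refl]) (simp add: Suc_diff_le)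
  finally have e: "(\<Sum>k=1..Suc n. (1 + x) ^ (Suc n - k) / of_nat k) = (1 + x) * (\<Sum>k=1..n. (1 + x) ^ (n - k) / of_nat k) + 1 / of_nat (Suc n)" .
  show ?thesis unfolding G_def e harm_Suc
    by (simp add: divide_inverse algebra_simps del: of_nat_Suc)
qed

lemma F_G: "F x n = G x n"
  by (induction n) (simp_all add: F_Suc G_Suc, simp add: F_def G_def harm_expand)

theorem proposition15:
  fixes n :: nat and x :: complex
  shows "((\<Sum>k=1..n. \<Sum>j=0..k-1. of_nat (n choose j) * x ^ (n - j) / of_nat (k - j))
           = (1 + x) ^ n * harm n - (\<Sum>k=1..n. (1 + x) ^ (n - k) / of_nat k)) \<and>
         ((\<Sum>k=1..n. \<Sum>j=0..k-1. of_nat (n choose j) / of_nat (k - j) :: complex)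
           = 2 ^ n * (harm n - (\<Sum>k=1..n. 1 / (2 ^ k * of_nat k))))"
proof
  show A: "(\<Sum>k=1..n. \<Sum>j=0..k-1. of_nat (n choose j) * x ^ (n - j) / of_nat (k - j))
           = (1 + x) ^ n * harm n - (\<Sum>k=1..n. (1 + x) ^ (n - k) / of_nat k)" for x :: complex
    using lhs_F[of n x] F_G[of x n] unfolding G_def by simp
  have "(\<Sum>k=1..n. (1 + 1) ^ (n - k) / of_nat k :: complex) = 2 ^ n * (\<Sum>k=1..n. 1 / (2 ^ k * of_nat k))"
    unfolding sum_distrib_left
  proof (rule sum.cong[OF refl])
    fix k assume "k \<in> {1..n}"
    then have "(2::complex)^n = 2^(n-k)*2^k" by (simp add: power_add[symmetric])
    then show "(1 + 1) ^ (n - k) / of_nat k = (2::complex) ^ n * (1 / (2 ^ k * of_nat k))" by simp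
  qed
  moreover have "(\<Sum>k=1..n. \<Sum>j=0..k-1. of_nat (n choose j) / of_nat (k - j) :: complex)
      = (1 + 1) ^ n * harm n - (\<Sum>k=1..n. (1 + 1) ^ (n - k) / of_nat k)"
    using A[of 1] by (simp only: power_one mult_1_right)
  ultimately show "(\<Sum>k=1..n. \<Sum>j=0..k-1. of_nat (n choose j) / of_nat (k - j) :: complex)
           = 2 ^ n * (harm n - (\<Sum>k=1..n. 1 / (2 ^ k * of_nat k)))"
    by (simp only: one_add_one right_diff_distrib)
qed

end
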